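(* Let $s_0<s_1<\dots<s_{\ell_x}$ and $t_0<t_1<\dots<t_{\ell_y}$ be real partitions and let $\{C_{ij}\in\mathbb{R}:0\le i\le \ell_x-1,\ 0\le j\le\ell_y-1\}$ be given, with $K:=\max_{i,j}|C_{ij}|>0$ and $\Delta:=\max_{i,j}\{s_{i+1}-s_i,t_{j+1}-t_j\}$. For an integer $\gamma\ge1$ and a pair of real sequences $(p,q)$ set $$\|(p,q)\|_\gamma=\max\Big\{\sup_{n\ge0}\Big|\frac{(n!)^2p_n}{(\gamma K\Delta)^n}\Big|,\ \sup_{n\ge0}\Big|\frac{(n!)^2q_n}{(\gamma K\Delta)^n}\Big|\Big\}.$$ Define sequences $p^{ij},q^{ij}$ by $p^{i0}=q^{0j}=(1,0,0,\dots)$ and recursively $(p^{i,j+1},q^{i+1,j})=\Lambda_{ij}(p^{ij},q^{ij})$, where for $n\ge0$ $$p^{i,j+1}_n=\sum_{k=0}^{n}p^{ij}_k\frac{(C_{ij}(t_{j+1}-t_j))^{n-k}k!}{(n-k)!\,n!}+\sum_{k=1}^{\infty}q^{ij}_k\frac{C_{ij}^n(t_{j+1}-t_j)^{n+k}k!}{(n+k)!\,n!},$$ $$q^{i+1,j}_n=\sum_{k=0}^{n}q^{ij}_k\frac{(C_{ij}(s_{i+1}-s_i))^{n-k}k!}{(n-k)!\,n!}+\sum_{k=1}^{\infty}p^{ij}_k\frac{C_{ij}^n(s_{i+1}-s_i)^{n+k}k!}{(n+k)!\,n!},$$ and write $\Lambda_{ij}:=(p^{i,j+1},q^{i+1,j})$.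 Then for all $0\le i\le\ell_x-1$, $0\le j\le\ell_y-1$, $$\|\Lambda_{ij}\|_{i+j+1}\le f(i+j),\qquad\text{where } f(k):=\prod_{m=0}^{k}I_0(2\sqrt{mK}\,\Delta).$$
   Context: $I_0$ is the zero-order modified Bessel function of the first kind, $I_0(2z)=\sum_{k\ge0}z^{2k}/(k!)^2$. The sequences $p^{ij},q^{ij}$ are the power-series coefficients of the solution $k$ of $\partial^2k/\partial s\partial t=C_{ij}k$ on each cell $[s_i,s_{i+1}]\times[t_j,t_{j+1}]$ with $k(s_0,\cdot)=k(\cdot,t_0)=1$, i.e. $k(s,t_j)=\sum_n p^{ij}_n(s-s_i)^n$ and $k(s_i,t)=\sum_n q^{ij}_n(t-t_j)^n$. *)

theory Defs
  imports "HOL-Analysis.Analysis"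
begin

definition bessel_I0 :: "real \<Rightarrow> real" where
  "bessel_I0 x = (\<Sum>k. (x / 2) ^ (2 * k) / (fact k)\<^sup>2)"

definition e0 :: "nat \<Rightarrow> real" where
  "e0 n = (if n = 0 then 1 else 0)"

definition Lam :: "real \<Rightarrow> real \<Rightarrow> (nat \<Rightarrow> real) \<Rightarrow> (nat \<Rightarrow> real) \<Rightarrow> nat \<Rightarrow> real" where
  "Lam c h a b n =
     (\<Sum>k = 0..n. a k * (c * h) ^ (n - k) * fact k / (fact (n - k) * fact n))
     + (\<Sum>k. b (Suc k) * c ^ n * h ^ (n + Suc k) * fact (Suc k) / (fact (n + Suc k) * fact n))"

function PP :: "(nat \<Rightarrow> real) \<Rightarrow> (nat \<Rightarrow> real) \<Rightarrow> (nat \<Rightarrow> nat \<Rightarrow> real) \<Rightarrow> nat \<Rightarrow> nat \<Rightarrow> nat \<Rightarrow> real"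
  and QQ :: "(nat \<Rightarrow> real) \<Rightarrow> (nat \<Rightarrow> real) \<Rightarrow> (nat \<Rightarrow> nat \<Rightarrow> real) \<Rightarrow> nat \<Rightarrow> nat \<Rightarrow> nat \<Rightarrow> real"
where
  "PP s t C i 0 = e0"
| "PP s t C i (Suc j) = Lam (C i j) (t (Suc j) - t j) (PP s t C i j) (QQ s t C i j)"
| "QQ s t C 0 j = e0"
| "QQ s t C (Suc i) j = Lam (C i j) (s (Suc i) - s i) (QQ s t C i j) (PP s t C i j)"
  by pat_completeness auto
termination
  by (relation "Wellfounded.measure (case_sum (\<lambda>(s,t,C,i,j). i + j) (\<lambda>(s,t,C,i,j). i + j))") auto

definition Kmax :: "nat \<Rightarrow> nat \<Rightarrow> (nat \<Rightarrow> nat \<Rightarrow> real) \<Rightarrow> real" where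
  "Kmax lx ly C = Max {\<bar>C i j\<bar> | i j. i < lx \<and> j < ly}"

definition Delta :: "nat \<Rightarrow> nat \<Rightarrow> (nat \<Rightarrow> real) \<Rightarrow> (nat \<Rightarrow> real) \<Rightarrow> real" where
  "Delta lx ly s t = max (Max {s (Suc i) - s i | i. i < lx}) (Max {t (Suc j) - t j | j. j < ly})"

text \<open>The weighted norm ||(p,q)||_gamma (valued in the extended reals, since the
  suprema may be infinite).\<close>
definition wnorm :: "nat \<Rightarrow> real \<Rightarrow> real \<Rightarrow> (nat \<Rightarrow> real) \<times> (nat \<Rightarrow> real) \<Rightarrow> ereal" where
  "wnorm \<gamma> K \<Delta> pq =
     max (SUP n. ereal \<bar>(fact n)\<^sup>2 * fst pq n / (real \<gamma> * K * \<Delta>) ^ n\<bar>)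
         (SUP n. ereal \<bar>(fact n)\<^sup>2 * snd pq n / (real \<gamma> * K * \<Delta>) ^ n\<bar>)"

definition fbound :: "real \<Rightarrow> real \<Rightarrow> nat \<Rightarrow> real" where
  "fbound K \<Delta> k = (\<Prod>m = 0..k. bessel_I0 (2 * sqrt (real m * K) * \<Delta>))"

end

theory Submission
  imports Defs
begin

lemma summ_sq: assumes "y \<ge> 0" shows "summable (\<lambda>k. y ^ k / (fact k)\<^sup>2 :: real)"
proof (rule summable_comparison_test[OF _ summable_exp[of y]])
  show "\<exists>N. \<forall>n\<ge>N. norm (y ^ n / (fact n)\<^sup>2) \<le> inverse (fact n) * y ^ n"
  proof (intro exI allI impI)
    fix n :: nat
    have f1: "(1::real) \<le> fact n" by simp
    have "y ^ n / (fact n)\<^sup>2 \<le> y ^ n / fact n"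
      using f1 assms by (intro divide_left_mono) (auto simp: power2_eq_square)
    then show "norm (y ^ n / (fact n)\<^sup>2) \<le> inverse (fact n) * y ^ n"
      using assms by (simp add: field_simps)
  qed
qed

lemma I0_eq:
  assumes "y \<ge> 0" "d \<ge> 0"
  shows "bessel_I0 (2 * sqrt y * d) = 1 + (\<Sum>k. (y*d^2) ^ Suc k / (fact (Suc k))\<^sup>2)"
    and "summable (\<lambda>k. (y*d^2) ^ Suc k / (fact (Suc k))\<^sup>2)"
    and "(\<Sum>k. (y*d^2) ^ Suc k / (fact (Suc k))\<^sup>2) \<ge> 0"
proof -
  have yd: "y*d^2 \<ge> 0" using assms by simp
  have e: "(2 * sqrt y * d / 2) ^ (2 * k) = (y*d^2)^k" for k
    using assms by (simp add: power_mult power_mult_distrib)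
  have S: "summable (\<lambda>k. (y*d^2) ^ k / (fact k)\<^sup>2)" by (rule summ_sq[OF yd])
  show S': "summable (\<lambda>k. (y*d^2) ^ Suc k / (fact (Suc k))\<^sup>2)"
    using S summable_Suc_iff[where f="\<lambda>k. (y*d^2) ^ k / (fact k)\<^sup>2"] by simp
  show "bessel_I0 (2 * sqrt y * d) = 1 + (\<Sum>k. (y*d^2) ^ Suc k / (fact (Suc k))\<^sup>2)"
    unfolding bessel_I0_def e using suminf_split_head[OF S] by simp
  show "(\<Sum>k. (y*d^2) ^ Suc k / (fact (Suc k))\<^sup>2) \<ge> 0"
    using yd by (intro suminf_nonneg[OF S']) simp
qed

lemma fact_mult_le_real: "(fact m * fact n :: real) \<le> fact (m + n)"
proof -
  have "fact m * fact n \<le> (fact (m+n) :: nat)"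
    using fact_fact_dvd_fact[of m n] by (intro dvd_imp_le) auto
  then have "real (fact m * fact n) \<le> real (fact (m+n))" by linarith
  then show ?thesis by simp
qed

lemma first_sum:
  fixes a :: "nat \<Rightarrow> real" and x g M ch :: real
  assumes x: "x \<ge> 0" and g: "g \<ge> 0" and M: "M \<ge> 0" and ch: "\<bar>ch\<bar> \<le> x"
    and ha: "\<And>n. \<bar>a n\<bar> \<le> M*(g*x)^n/(fact n)^2"
  shows "\<bar>\<Sum>k = 0..n. a k * ch ^ (n - k) * fact k / (fact (n - k) * fact n)\<bar>
     \<le> M * ((g+1)*x)^n / (fact n)^2"
proof -
  have "\<bar>\<Sum>k = 0..n. a k * ch ^ (n - k) * fact k / (fact (n - k) * fact n)\<bar>
     \<le> (\<Sum>k = 0..n. \<bar>a k * ch ^ (n - k) * fact k / (fact (n - k) * fact n)\<bar>)"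
    by (rule sum_abs)
  also have "\<dots> \<le> (\<Sum>k = 0..n. M*(g*x)^k/(fact k)^2 * x ^ (n - k) * fact k / (fact (n - k) * fact n))"
  proof (rule sum_mono)
    fix k assume "k \<in> {0..n}"
    have "\<bar>a k * ch ^ (n - k) * fact k / (fact (n - k) * fact n)\<bar>
       = \<bar>a k\<bar> * \<bar>ch\<bar> ^ (n - k) * (fact k / (fact (n - k) * fact n))"
      by (simp add: abs_mult power_abs)
    also have "\<dots> \<le> M*(g*x)^k/(fact k)^2 * x ^ (n - k) * (fact k / (fact (n - k) * fact n))"
      using ha[of k] ch x M g
      by (intro mult_right_mono mult_mono power_mono) auto
    finally show "\<bar>a k * ch ^ (n - k) * fact k / (fact (n - k) * fact n)\<bar>
       \<le> M*(g*x)^k/(fact k)^2 * x ^ (n - k) * fact k / (fact (n - k) * fact n)" by simp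
  qed
  also have "\<dots> = (\<Sum>k = 0..n. M * x^n / (fact n)^2 * (of_nat (n choose k) * g^k * 1^(n-k)))"
  proof (rule sum.cong[OF refl])
    fix k assume k: "k \<in> {0..n}"
    then have kn: "k \<le> n" by simp
    have bf: "fact k * fact (n - k) * real (n choose k) = fact n"
      using binomial_fact_lemma[OF kn] by (metis of_nat_fact of_nat_mult)
    have xp: "x^n = x^k * x^(n-k)" using kn by (simp add: power_add[symmetric])
    show "M*(g*x)^k/(fact k)^2 * x ^ (n - k) * fact k / (fact (n - k) * fact n)
        = M * x^n / (fact n)^2 * (of_nat (n choose k) * g^k * 1^(n-k))"
      unfolding xp bf[symmetric] by (simp add: field_simps power2_eq_square power_mult_distrib)
  qed
  also have "\<dots> = M * x^n / (fact n)^2 * (g+1)^n"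
    by (simp add: sum_distrib_left[symmetric] binomial_ring atLeast0AtMost sum_divide_distrib[symmetric] del: sum_divide_distrib)
  also have "\<dots> = M * ((g+1)*x)^n / (fact n)^2" by (simp add: power_mult_distrib)
  finally show ?thesis .
qed

lemma second_term:
  fixes b :: "nat \<Rightarrow> real" and K D g M c h :: real
  assumes K: "K \<ge> 0" and D: "D \<ge> 0" and g: "g \<ge> 0" and M: "M \<ge> 0" and c: "\<bar>c\<bar> \<le> K"
    and h0: "0 \<le> h" and hD: "h \<le> D"
    and hb: "\<And>n. \<bar>b n\<bar> \<le> M*(g*(K*D))^n/(fact n)^2"
  shows "\<bar>b (m) * c ^ n * h ^ (n + m) * fact (m) / (fact (n + m) * fact n)\<bar>
     \<le> M*((g+1)*(K*D))^n/(fact n)^2 * ((g*K*D^2)^m/(fact (m))^2)"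
proof -
  define P where "P = M * g^(m) * K^(n + m) * D^(n + 2 * m)"
  have P0: "P \<ge> 0" unfolding P_def using M g K D by simp
  have "\<bar>b (m) * c ^ n * h ^ (n + m) * fact (m) / (fact (n + m) * fact n)\<bar>
      = \<bar>b (m)\<bar> * \<bar>c\<bar> ^ n * h ^ (n + m) * (fact (m) / (fact (n + m) * fact n))"
    using h0 by (simp add: abs_mult power_abs)
  also have "\<dots> \<le> M*(g*(K*D))^(m)/(fact (m))^2 * K ^ n * D ^ (n + m) * (fact (m) / (fact (n + m) * fact n))"
    using hb[of "m"] c h0 hD K D M g
    by (intro mult_right_mono mult_mono power_mono) auto
  also have "\<dots> = P / (fact (m) * fact (n + m) * fact n)"
    unfolding P_def by (simp add: field_simps power2_eq_square power_mult_distrib power_add power_mult)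
  also have "\<dots> \<le> P * (g+1)^n / ((fact n)^2 * (fact (m))^2)"
  proof -
    have f: "fact n * fact (m) \<le> (fact (n + m) :: real)" by (rule fact_mult_le_real)
    have g1: "(1::real) \<le> (g+1)^n" using g by simp
    have "fact n * fact (m) * 1 \<le> (fact (n + m) :: real) * (g+1)^n"
      using f g1 by (intro mult_mono) auto
    then have "(fact n)^2 * (fact (m))^2 \<le> (fact (m) * fact (n + m) * fact n) * (g+1)^n"
      by (simp add: power2_eq_square)
    then show ?thesis using P0
      by (simp add: divide_simps) (smt (verit) mult.commute mult.left_commute mult_left_mono)
  qed
  also have "\<dots> = M*((g+1)*(K*D))^n/(fact n)^2 * ((g*K*D^2)^m/(fact (m))^2)"
    unfolding P_def power_mult_distrib by (simp add: field_simps power2_eq_square power_add power_mult)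
  finally show ?thesis .
qed

lemma step:
  fixes a b :: "nat \<Rightarrow> real" and K D g M c h :: real
  assumes K: "K \<ge> 0" and D: "D \<ge> 0" and g: "g \<ge> 0" and M: "M \<ge> 0" and c: "\<bar>c\<bar> \<le> K"
    and h0: "0 \<le> h" and hD: "h \<le> D"
    and ha: "\<And>n. \<bar>a n\<bar> \<le> M*(g*K*D)^n/(fact n)^2"
    and hb: "\<And>n. \<bar>b n\<bar> \<le> M*(g*K*D)^n/(fact n)^2"
  shows "\<bar>Lam c h a b n\<bar> \<le> M * bessel_I0 (2 * sqrt (g*K)*D) * ((g+1)*K*D)^n/(fact n)^2"
proof -
  define A where "A = M*((g+1)*(K*D))^n/(fact n)^2"
  define v where "v = (\<lambda>k. (g*K*D^2)^Suc k/(fact (Suc k))^2)"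
  define T where "T = (\<lambda>k. b (Suc k) * c ^ n * h ^ (n + Suc k) * fact (Suc k) / (fact (n + Suc k) * fact n))"
  have gK: "g*K \<ge> 0" using g K by simp
  have vs: "summable v" unfolding v_def using I0_eq(2)[OF gK D] by simp
  have I0: "bessel_I0 (2 * sqrt (g*K)*D) = 1 + suminf v" unfolding v_def using I0_eq(1)[OF gK D] by simp
  have ha': "\<And>n. \<bar>a n\<bar> \<le> M*(g*(K*D))^n/(fact n)^2" using ha by (simp add: mult.assoc)
  have hb': "\<And>n. \<bar>b n\<bar> \<le> M*(g*(K*D))^n/(fact n)^2" using hb by (simp add: mult.assoc)
  have ch: "\<bar>c*h\<bar> \<le> K*D" using c h0 hD K by (simp add: abs_mult mult_mono)
  have KD: "K*D \<ge> 0" using K D by simp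
  have s1: "\<bar>\<Sum>k = 0..n. a k * (c*h) ^ (n - k) * fact k / (fact (n - k) * fact n)\<bar> \<le> A"
    unfolding A_def by (rule first_sum[OF KD g M ch ha'])
  have Tb: "\<bar>T k\<bar> \<le> A * v k" for k
    unfolding T_def A_def v_def by (rule second_term[OF K D g M c h0 hD hb'])
  have us: "summable (\<lambda>k. A * v k)" by (rule summable_mult[OF vs])
  have Ts: "summable (\<lambda>k. \<bar>T k\<bar>)"
    by (rule summable_rabs_comparison_test[OF _ us]) (use Tb in auto)
  have "\<bar>suminf T\<bar> \<le> (\<Sum>k. \<bar>T k\<bar>)" by (rule summable_rabs[OF Ts])
  also have "\<dots> \<le> (\<Sum>k. A * v k)" by (rule suminf_le[OF Tb Ts us])
  also have "\<dots> = A * suminf v" by (rule suminf_mult[OF vs])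
  finally have s2: "\<bar>suminf T\<bar> \<le> A * suminf v" .
  have "\<bar>Lam c h a b n\<bar> \<le> \<bar>\<Sum>k = 0..n. a k * (c*h) ^ (n - k) * fact k / (fact (n - k) * fact n)\<bar> + \<bar>suminf T\<bar>"
    unfolding Lam_def T_def by (rule abs_triangle_ineq)
  also have "\<dots> \<le> A + A * suminf v" using s1 s2 by simp
  also have "\<dots> = M * bessel_I0 (2 * sqrt (g*K)*D) * ((g+1)*K*D)^n/(fact n)^2"
    unfolding I0 A_def by (simp add: field_simps)
  finally show ?thesis .
qed

definition GG :: "real \<Rightarrow> real \<Rightarrow> nat \<Rightarrow> real" where
  "GG K D m = (\<Prod>m'<m. bessel_I0 (2 * sqrt (real m' * K) * D))"

lemma I0_ge1: "y \<ge> 0 \<Longrightarrow> d \<ge> 0 \<Longrightarrow> bessel_I0 (2 * sqrt y * d) \<ge> 1"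
  using I0_eq(1,3)[of y d] by simp

lemma GG_ge1: "K \<ge> 0 \<Longrightarrow> D \<ge> 0 \<Longrightarrow> GG K D m \<ge> 1"
  unfolding GG_def by (intro prod_ge_1 I0_ge1) auto

lemma GG_Suc: "GG K D (Suc m) = GG K D m * bessel_I0 (2 * sqrt (real m * K) * D)"
  unfolding GG_def by simp

lemma e0_bound: "G \<ge> 1 \<Longrightarrow> z \<ge> 0 \<Longrightarrow> \<bar>e0 n\<bar> \<le> G * z^n/(fact n)^2"
  unfolding e0_def by auto

lemma invariant:
  fixes s t :: "nat \<Rightarrow> real" and C :: "nat \<Rightarrow> nat \<Rightarrow> real" and K D :: real
  assumes K: "K > 0" and D: "D > 0"
    and hC: "\<And>i j. i < lx \<Longrightarrow> j < ly \<Longrightarrow> \<bar>C i j\<bar> \<le> K"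
    and hs: "\<And>i. i < lx \<Longrightarrow> 0 \<le> s (Suc i) - s i \<and> s (Suc i) - s i \<le> D"
    and ht: "\<And>j. j < ly \<Longrightarrow> 0 \<le> t (Suc j) - t j \<and> t (Suc j) - t j \<le> D"
  shows "\<forall>i j. i + j = m \<longrightarrow>
     (i < lx \<and> j \<le> ly \<longrightarrow> (\<forall>n. \<bar>PP s t C i j n\<bar> \<le> GG K D m * (real m*K*D)^n/(fact n)^2)) \<and>
     (i \<le> lx \<and> j < ly \<longrightarrow> (\<forall>n. \<bar>QQ s t C i j n\<bar> \<le> GG K D m * (real m*K*D)^n/(fact n)^2))"
proof (induction m)
  case 0
  have "GG K D 0 \<ge> 1" using GG_ge1 K D by simp
  then show ?case by (auto intro!: e0_bound)
next
  case (Suc m)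
  have G1: "GG K D (Suc m) \<ge> 1" using GG_ge1 K D by simp
  have z: "real (Suc m)*K*D \<ge> 0" using K D by simp
  have Gm: "GG K D m \<ge> 0" using GG_ge1[of K D m] K D by simp
  have conv: "GG K D m * bessel_I0 (2 * sqrt (real m * K) * D) * ((real m+1)*K*D)^n/(fact n)^2
     = GG K D (Suc m) * (real (Suc m)*K*D)^n/(fact n)^2" for n
    by (simp add: GG_Suc add.commute)
  show ?case
  proof (intro allI impI conjI)
    fix i j n assume ij: "i + j = Suc m"
    {
      assume a: "i < lx \<and> j \<le> ly"
      show "\<bar>PP s t C i j n\<bar> \<le> GG K D (Suc m) * (real (Suc m)*K*D)^n/(fact n)^2"
      proof (cases j)
        case 0 then show ?thesis using G1 z by (simp add: e0_bound)
      next
        case (Suc j')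
        have i1: "i + j' = m" using ij Suc by simp
        have IH1: "\<And>n. \<bar>PP s t C i j' n\<bar> \<le> GG K D m * (real m*K*D)^n/(fact n)^2"
          using Suc.IH i1 a Suc by auto
        have IH2: "\<And>n. \<bar>QQ s t C i j' n\<bar> \<le> GG K D m * (real m*K*D)^n/(fact n)^2"
          using Suc.IH i1 a Suc by auto
        have "\<bar>PP s t C i j n\<bar> \<le> GG K D m * bessel_I0 (2 * sqrt (real m * K) * D) * ((real m+1)*K*D)^n/(fact n)^2"
          unfolding Suc PP.simps
          by (rule step[OF less_imp_le[OF K] less_imp_le[OF D] _ Gm hC]) (use ht a Suc IH1 IH2 in auto)
        then show ?thesis using conv by simp
      qed
    }
    {
      assume a: "i \<le> lx \<and> j < ly"
      show "\<bar>QQ s t C i j n\<bar> \<le> GG K D (Suc m) * (real (Suc m)*K*D)^n/(fact n)^2"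
      proof (cases i)
        case 0 then show ?thesis using G1 z by (simp add: e0_bound)
      next
        case (Suc i')
        have i1: "i' + j = m" using ij Suc by simp
        have IH1: "\<And>n. \<bar>PP s t C i' j n\<bar> \<le> GG K D m * (real m*K*D)^n/(fact n)^2"
          using Suc.IH i1 a Suc by auto
        have IH2: "\<And>n. \<bar>QQ s t C i' j n\<bar> \<le> GG K D m * (real m*K*D)^n/(fact n)^2"
          using Suc.IH i1 a Suc by auto
        have "\<bar>QQ s t C i j n\<bar> \<le> GG K D m * bessel_I0 (2 * sqrt (real m * K) * D) * ((real m+1)*K*D)^n/(fact n)^2"
          unfolding Suc QQ.simps
          by (rule step[OF less_imp_le[OF K] less_imp_le[OF D] _ Gm hC]) (use hs a Suc IH1 IH2 in auto)
        then show ?thesis using conv by simp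
      qed
    }
  qed
qed

theorem mainTheorem4:
  fixes lx ly :: nat and s t :: "nat \<Rightarrow> real" and C :: "nat \<Rightarrow> nat \<Rightarrow> real"
  assumes "0 < lx" and "0 < ly"
    and "\<forall>i<lx. s i < s (Suc i)"
    and "\<forall>j<ly. t j < t (Suc j)"
    and "0 < Kmax lx ly C"
  shows "\<forall>i<lx. \<forall>j<ly.
           wnorm (Suc (i + j)) (Kmax lx ly C) (Delta lx ly s t)
                 (PP s t C i (Suc j), QQ s t C (Suc i) j)
           \<le> ereal (fbound (Kmax lx ly C) (Delta lx ly s t) (i + j))"
proof (intro allI impI)
  fix i j assume i: "i < lx" and j: "j < ly"
  define K where "K = Kmax lx ly C"
  define D where "D = Delta lx ly s t"
  have K: "K > 0" using assms(5) K_def by simp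
  have finC: "finite {\<bar>C i j\<bar> | i j. i < lx \<and> j < ly}"
  proof -
    have "{\<bar>C i j\<bar> | i j. i < lx \<and> j < ly} = (\<lambda>(i,j). \<bar>C i j\<bar>) ` ({..<lx} \<times> {..<ly})" by auto
    then show ?thesis by simp
  qed
  have hC: "\<And>i j. i < lx \<Longrightarrow> j < ly \<Longrightarrow> \<bar>C i j\<bar> \<le> K"
    unfolding K_def Kmax_def by (rule Max_ge[OF finC]) blast
  have fins: "finite {s (Suc i) - s i | i. i < lx}"
  proof -
    have "{s (Suc i) - s i | i. i < lx} = (\<lambda>i. s (Suc i) - s i) ` {..<lx}" by auto
    then show ?thesis by simp
  qed
  have fint: "finite {t (Suc i) - t i | i. i < ly}"
  proof -
    have "{t (Suc i) - t i | i. i < ly} = (\<lambda>i. t (Suc i) - t i) ` {..<ly}" by auto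
    then show ?thesis by simp
  qed
  have sD: "s (Suc i) - s i \<le> D" if "i < lx" for i
  proof -
    have "s (Suc i) - s i \<le> Max {s (Suc i) - s i | i. i < lx}" by (rule Max_ge[OF fins]) (use that in blast)
    then show ?thesis unfolding D_def Delta_def by simp
  qed
  have tD: "t (Suc i) - t i \<le> D" if "i < ly" for i
  proof -
    have "t (Suc i) - t i \<le> Max {t (Suc i) - t i | i. i < ly}" by (rule Max_ge[OF fint]) (use that in blast)
    then show ?thesis unfolding D_def Delta_def by simp
  qed
  have D: "D > 0" using sD[of 0] assms(1,3) by force
  have hs: "\<And>i. i < lx \<Longrightarrow> 0 \<le> s (Suc i) - s i \<and> s (Suc i) - s i \<le> D"
    using sD assms(3) by (auto simp: less_imp_le)
  have ht: "\<And>j. j < ly \<Longrightarrow> 0 \<le> t (Suc j) - t j \<and> t (Suc j) - t j \<le> D"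
    using tD assms(4) by (auto simp: less_imp_le)
  note inv = invariant[where s=s and t=t and C=C and lx=lx and ly=ly and m="Suc (i+j)", OF K D hC hs ht]
  define G where "G = GG K D (Suc (i+j))"
  have Pb: "\<And>n. \<bar>PP s t C i (Suc j) n\<bar> \<le> G * (real (Suc (i+j))*K*D)^n/(fact n)^2"
    using inv i j unfolding G_def by (auto simp del: PP.simps QQ.simps)
  have Qb: "\<And>n. \<bar>QQ s t C (Suc i) j n\<bar> \<le> G * (real (Suc (i+j))*K*D)^n/(fact n)^2"
    using inv i j unfolding G_def by (auto simp del: PP.simps QQ.simps)
  have fb: "fbound K D (i+j) = G"
    unfolding fbound_def G_def GG_def by (simp add: atLeast0AtMost lessThan_Suc_atMost)
  have z: "real (Suc (i+j))*K*D > 0" using K D by simp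
  have key: "\<And>f. (\<And>n. \<bar>f n\<bar> \<le> G * (real (Suc (i+j))*K*D)^n/(fact n)^2) \<Longrightarrow>
      (SUP n. ereal \<bar>(fact n)\<^sup>2 * f n / (real (Suc (i+j)) * K * D) ^ n\<bar>) \<le> ereal G"
  proof -
    fix f :: "nat \<Rightarrow> real" assume hf: "\<And>n. \<bar>f n\<bar> \<le> G * (real (Suc (i+j))*K*D)^n/(fact n)^2"
    show "(SUP n. ereal \<bar>(fact n)\<^sup>2 * f n / (real (Suc (i+j)) * K * D) ^ n\<bar>) \<le> ereal G"
    proof (rule SUP_least)
      fix n
      define z' where "z' = (real (Suc (i+j)) * K * D) ^ n"
      have z'p: "z' > 0" unfolding z'_def using z by simp
      have fp: "(fact n :: real)^2 > 0" by simp
      have "\<bar>(fact n)\<^sup>2 * f n / z'\<bar> = (fact n)\<^sup>2 * \<bar>f n\<bar> / z'"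
        using z'p by (simp add: abs_mult)
      also have "\<dots> \<le> (fact n)\<^sup>2 * (G * z'/(fact n)^2) / z'"
        using hf[of n] z'p fp unfolding z'_def
        by (intro divide_right_mono mult_left_mono) auto
      also have "\<dots> = G" using z'p fp by (simp add: field_simps)
      finally show "ereal \<bar>(fact n)\<^sup>2 * f n / (real (Suc (i+j)) * K * D) ^ n\<bar> \<le> ereal G"
        unfolding z'_def by simp
    qed
  qed
  show "wnorm (Suc (i + j)) (Kmax lx ly C) (Delta lx ly s t)
                 (PP s t C i (Suc j), QQ s t C (Suc i) j)
           \<le> ereal (fbound (Kmax lx ly C) (Delta lx ly s t) (i + j))"
    unfolding K_def[symmetric] D_def[symmetric] wnorm_def fb
    using key[OF Pb] key[OF Qb] by simp
qed
end
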